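(* Let $I\subseteq \mathrm{Int}(\mathbb{Z})$ be a principal ideal with $I\cap\mathbb{Z}=n\mathbb{Z}$ for some integer $n\neq 0$. Then $I=n\,\mathrm{Int}(\mathbb{Z})$. In particular $n\,\mathrm{Int}(\mathbb{Z})\cap\mathbb{Z}=n\mathbb{Z}$ for every nonzero integer $n$. Moreover, for nonzero integers $n_1,n_2$ we have $n_1\mathrm{Int}(\mathbb{Z})=n_2\mathrm{Int}(\mathbb{Z})$ if and only if $n_1=\pm n_2$.
   Context: $\mathrm{Int}(\mathbb{Z})=\{f\in\mathbb{Q}[X] : f(\mathbb{Z})\subseteq\mathbb{Z}\}$ is the ring of integer-valued polynomials. An ideal $I$ of $\mathrm{Int}(\mathbb{Z})$ is called unitary if $I\cap\mathbb{Z}\neq\{0\}$. *)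

theory Defs
  imports "HOL-Computational_Algebra.Polynomial"
begin

definition IntZ :: "rat poly set" where
  "IntZ = {f. \<forall>z::int. poly f (of_int z) \<in> \<int>}"

definition pideal :: "rat poly \<Rightarrow> rat poly set" where
  "pideal f = {f * g | g. g \<in> IntZ}"

definition int_part :: "rat poly set \<Rightarrow> int set" where
  "int_part I = {k::int. [:of_int k:] \<in> I}"

end

theory Submission
  imports Defs
begin

lemma IntZ_neg: "g \<in> IntZ \<Longrightarrow> -g \<in> IntZ"
  unfolding IntZ_def by auto

lemma IntZ_const: "[:of_int m:] \<in> IntZ"
  unfolding IntZ_def by auto

lemma pideal_neg: "pideal [:- c:] = pideal [:c:]"
proof -
  have e: "[:- c:] * g = [:c:] * (- g)" for g by simp
  show ?thesis unfolding pideal_def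
    apply (auto simp: e)
     apply (metis IntZ_neg smult_minus_right)
    by (metis IntZ_neg minus_minus smult_minus_right)
qed

lemma int_part_const:
  assumes n: "(n::int) \<noteq> 0"
  shows "int_part (pideal [:of_int n:]) = {n * m | m. True}"
proof (intro set_eqI iffI)
  fix k assume "k \<in> int_part (pideal [:of_int n:])"
  then obtain g where g: "g \<in> IntZ" and e: "[:of_int k:] = [:of_int n:] * g"
    unfolding int_part_def pideal_def by auto
  have "poly [:of_int k:] (0::rat) = of_int n * poly g 0" using e by simp
  then have k: "of_int k = (of_int n :: rat) * poly g 0" by simp
  from g have "poly g (of_int 0) \<in> \<int>" unfolding IntZ_def by blast
  then obtain m where "poly g 0 = (of_int m :: rat)" by (auto elim: Ints_cases)
  with k have "(of_int k :: rat) = of_int (n * m)" by simp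
  then have "k = n * m" by linarith
  then show "k \<in> {n * m | m. True}" by auto
next
  fix k assume "k \<in> {n * m | m. True}"
  then obtain m where "k = n * m" by auto
  then have "[:of_int k:] = [:of_int n:] * [:(of_int m::rat):]" by (simp add: mult.commute)
  then show "k \<in> int_part (pideal [:of_int n:])"
    unfolding int_part_def pideal_def using IntZ_const by blast
qed

lemma mult_sets_eq:
  assumes "{(a::int) * m | m. True} = {b * m | m. True}"
  shows "a = b \<or> a = - b"
proof -
  have "a \<in> {b * m | m. True}" using assms by (metis (mono_tags, lifting) mem_Collect_eq mult.right_neutral)
  then have "b dvd a" by auto
  moreover have "b \<in> {a * m | m. True}" using assms by (metis (mono_tags, lifting) mem_Collect_eq mult.right_neutral)
  then have "a dvd b" by auto
  ultimately have "\<bar>a\<bar> = \<bar>b\<bar>" using zdvd_antisym_abs by blast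
  then show ?thesis by (auto simp: abs_if split: if_splits)
qed

lemma pideal_pm:
  assumes "a = b \<or> a = - b"
  shows "pideal [:of_int a:] = pideal [:of_int b:]"
  using assms pideal_neg[of "of_int b"] by auto

theorem mainTheorem1:
  shows "(\<forall>f (n::int). f \<in> IntZ \<and> n \<noteq> 0 \<and> int_part (pideal f) = {n * m | m. True}
            \<longrightarrow> pideal f = pideal [:of_int n:])
       \<and> (\<forall>n::int. n \<noteq> 0 \<longrightarrow> int_part (pideal [:of_int n:]) = {n * m | m. True})
       \<and> (\<forall>n1 n2 :: int. n1 \<noteq> 0 \<and> n2 \<noteq> 0 \<longrightarrow>
            (pideal [:of_int n1:] = pideal [:of_int n2:] \<longleftrightarrow> n1 = n2 \<or> n1 = - n2))"
proof (intro conjI allI impI)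
  fix f n assume H: "f \<in> IntZ \<and> (n::int) \<noteq> 0 \<and> int_part (pideal f) = {n * m | m. True}"
  then have fI: "f \<in> IntZ" and n: "n \<noteq> 0" and ip: "int_part (pideal f) = {n * m | m. True}" by auto
  have "n \<in> int_part (pideal f)" using ip by auto
  then obtain g where e: "[:of_int n:] = f * g" unfolding int_part_def pideal_def by auto
  have nz: "[:(of_int n::rat):] \<noteq> 0" using n by simp
  then have "f \<noteq> 0" "g \<noteq> 0" using e by auto
  then have "degree (f * g) = degree f + degree g" by (rule degree_mult_eq)
  with e have "degree f = 0" by (metis add_is_0 degree_pCons_0)
  then have fc: "f = [:poly f 0:]" by (metis degree_0_id poly_0_coeff_0)
  from fI have "poly f (of_int 0) \<in> \<int>" unfolding IntZ_def by blast
  then obtain c where "poly f 0 = (of_int c :: rat)" by (auto elim: Ints_cases)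
  with fc have fc2: "f = [:of_int c:]" by simp
  with \<open>f \<noteq> 0\<close> have "c \<noteq> 0" by auto
  with ip fc2 int_part_const have "{c * m | m. True} = {n * m | m. True}" by metis
  then have "c = n \<or> c = - n" by (rule mult_sets_eq)
  then show "pideal f = pideal [:of_int n:]" using fc2 pideal_pm by simp
next
  fix n :: int assume "n \<noteq> 0"
  then show "int_part (pideal [:of_int n:]) = {n * m | m. True}" by (rule int_part_const)
next
  fix n1 n2 :: int assume H: "n1 \<noteq> 0 \<and> n2 \<noteq> 0"
  show "pideal [:of_int n1:] = pideal [:of_int n2:] \<longleftrightarrow> n1 = n2 \<or> n1 = - n2"
  proof
    assume "pideal [:of_int n1:] = pideal [:of_int n2:]"
    then have "{n1 * m | m. True} = {n2 * m | m. True}" using H int_part_const by metis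
    then show "n1 = n2 \<or> n1 = - n2" by (rule mult_sets_eq)
  next
    assume "n1 = n2 \<or> n1 = - n2" then show "pideal [:of_int n1:] = pideal [:of_int n2:]" by (rule pideal_pm)
  qed
qed

end
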